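(* Let \(K\rightarrowtail L\twoheadrightarrow P\) be an extension of complete, torsionfree bornological \(V\)-modules and assume that \(P\) is algebraically torsionfree. Then \(K'\rightarrowtail L'\twoheadrightarrow P'\) is an extension of complete bornological \(V\)-modules as well. In addition, \(L\) is nuclear if and only if both \(K\) and \(P\) are nuclear.
   Context: Let \(V\) be a complete discrete valuation ring with uniformiser \(\pi\). A bornology on a set is a collection of subsets (called bounded) containing all finite subsets and closed under finite unions and under taking subsets. A bornological \(V\)-module is a \(V\)-module with a bornology such that every bounded subset is contained in a bounded \(V\)-submodule; bounded maps send bounded sets to bounded sets. It is complete if every bounded subset is contained in a bounded, \(\pi\)-adically complete \(V\)-submodule, and torsionfree if it is torsionfree as a \(V\)-module and \(\pi^{-1}S=\{x:\pi x\in S\}\) is bounded for every bounded \(S\). An extension \(K\rightarrowtail L\twoheadrightarrow P\) is a sequence of bounded \(V\)-linear maps, exact as \(V\)-modules, in which \(K\to L\) is a bornological embedding (a subset of \(K\) is bounded iff its image in \(L\) is bounded) and \(L\to P\) is a bornological quotient map (every bounded subset of \(P\) is the image of a bounded subset of \(L\)). A subset \(S\) of \(M\) is compactoid if there is a bounded \(V\)-submodule \(T\subseteq M\) with \(S\subseteq T\) such that for every \(n\in\mathbb N\) there is a finite set \(F_n\subseteq T\) with \(S\subseteq VF_n+\pi^nT\). \(M'\) denotes \(M\) with the bornology of compactoid subsets; \(M\) is nuclear if all its bounded subsets are compactoid. *)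

theory Defs
  imports Complex_Main
begin

section \<open>Complete discrete valuation rings\<close>

text \<open>pi-adic completeness (Cauchy sequences converge) together with separatedness,
  for a submodule T of a module with scalar multiplication scale.\<close>
definition pi_adic_complete ::
  "('v::comm_ring_1 \<Rightarrow> 'm::ab_group_add \<Rightarrow> 'm) \<Rightarrow> 'v \<Rightarrow> 'm set \<Rightarrow> bool" where
  "pi_adic_complete scale \<pi> T \<longleftrightarrow>
     (\<Inter>n. scale (\<pi> ^ n) ` T) = {0} \<and>
     (\<forall>x::nat \<Rightarrow> 'm. (\<forall>n. x n \<in> T) \<longrightarrow>
        (\<forall>k. \<exists>N. \<forall>m\<ge>N. \<forall>n\<ge>N. x m - x n \<in> scale (\<pi> ^ k) ` T) \<longrightarrow>
        (\<exists>y\<in>T. \<forall>k. \<exists>N. \<forall>n\<ge>N. x n - y \<in> scale (\<pi> ^ k) ` T))"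

text \<open>V (the whole type 'v) is a discrete valuation ring with uniformiser pi.\<close>
definition dvr_uniformiser :: "'v::idom \<Rightarrow> bool" where
  "dvr_uniformiser \<pi> \<longleftrightarrow> \<pi> \<noteq> 0 \<and> \<not> (\<pi> dvd 1) \<and>
     (\<forall>a. a \<noteq> 0 \<longrightarrow> (\<exists>u n. u dvd 1 \<and> a = u * \<pi> ^ n))"

definition complete_dvr :: "'v::idom \<Rightarrow> bool" where
  "complete_dvr \<pi> \<longleftrightarrow> dvr_uniformiser \<pi> \<and> pi_adic_complete (*) \<pi> (UNIV :: 'v set)"

section \<open>Bornological modules\<close>

definition bornology :: "'m set set \<Rightarrow> bool" where
  "bornology B \<longleftrightarrow> (\<forall>S. finite S \<longrightarrow> S \<in> B) \<and>
     (\<forall>S\<in>B. \<forall>T\<in>B. S \<union> T \<in> B) \<and> (\<forall>S\<in>B. \<forall>T. T \<subseteq> S \<longrightarrow> T \<in> B)"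

definition born_module ::
  "('v::comm_ring_1 \<Rightarrow> 'm::ab_group_add \<Rightarrow> 'm) \<Rightarrow> 'm set set \<Rightarrow> bool" where
  "born_module scale B \<longleftrightarrow> module scale \<and> bornology B \<and>
     (\<forall>S\<in>B. \<exists>T\<in>B. module.subspace scale T \<and> S \<subseteq> T)"

definition bounded_map :: "'a set set \<Rightarrow> 'b set set \<Rightarrow> ('a \<Rightarrow> 'b) \<Rightarrow> bool" where
  "bounded_map B1 B2 f \<longleftrightarrow> (\<forall>S\<in>B1. f ` S \<in> B2)"

definition complete_born_module ::
  "('v::comm_ring_1 \<Rightarrow> 'm::ab_group_add \<Rightarrow> 'm) \<Rightarrow> 'v \<Rightarrow> 'm set set \<Rightarrow> bool" where
  "complete_born_module scale \<pi> B \<longleftrightarrow> born_module scale B \<and>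
     (\<forall>S\<in>B. \<exists>T\<in>B. module.subspace scale T \<and> pi_adic_complete scale \<pi> T \<and> S \<subseteq> T)"

definition alg_torsionfree :: "('v::comm_ring_1 \<Rightarrow> 'm::ab_group_add \<Rightarrow> 'm) \<Rightarrow> bool" where
  "alg_torsionfree scale \<longleftrightarrow> (\<forall>c x. c \<noteq> 0 \<longrightarrow> scale c x = 0 \<longrightarrow> x = 0)"

definition born_torsionfree ::
  "('v::comm_ring_1 \<Rightarrow> 'm::ab_group_add \<Rightarrow> 'm) \<Rightarrow> 'v \<Rightarrow> 'm set set \<Rightarrow> bool" where
  "born_torsionfree scale \<pi> B \<longleftrightarrow> alg_torsionfree scale \<and>
     (\<forall>S\<in>B. {x. scale \<pi> x \<in> S} \<in> B)"

text \<open>An extension K >-> L ->> P.\<close>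
definition born_extension ::
  "('v::comm_ring_1 \<Rightarrow> 'k::ab_group_add \<Rightarrow> 'k) \<Rightarrow> 'k set set \<Rightarrow>
   ('v \<Rightarrow> 'l::ab_group_add \<Rightarrow> 'l) \<Rightarrow> 'l set set \<Rightarrow>
   ('v \<Rightarrow> 'p::ab_group_add \<Rightarrow> 'p) \<Rightarrow> 'p set set \<Rightarrow>
   ('k \<Rightarrow> 'l) \<Rightarrow> ('l \<Rightarrow> 'p) \<Rightarrow> bool" where
  "born_extension sK BK sL BL sP BP f g \<longleftrightarrow>
     module_hom sK sL f \<and> module_hom sL sP g \<and>
     bounded_map BK BL f \<and> bounded_map BL BP g \<and>
     inj f \<and> range f = {y. g y = 0} \<and> surj g \<and>
     (\<forall>S. S \<in> BK \<longleftrightarrow> f ` S \<in> BL) \<and>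
     (\<forall>S\<in>BP. \<exists>T\<in>BL. S = g ` T)"

section \<open>Compactoid subsets and nuclearity\<close>

definition compactoid ::
  "('v::comm_ring_1 \<Rightarrow> 'm::ab_group_add \<Rightarrow> 'm) \<Rightarrow> 'v \<Rightarrow> 'm set set \<Rightarrow> 'm set \<Rightarrow> bool" where
  "compactoid scale \<pi> B S \<longleftrightarrow>
     (\<exists>T\<in>B. module.subspace scale T \<and> S \<subseteq> T \<and>
        (\<forall>n::nat. \<exists>F. finite F \<and> F \<subseteq> T \<and>
           S \<subseteq> {a + b | a b. a \<in> module.span scale F \<and> b \<in> scale (\<pi> ^ n) ` T}))"

text \<open>The compactoid bornology M' on M.\<close>
definition compactoid_born ::
  "('v::comm_ring_1 \<Rightarrow> 'm::ab_group_add \<Rightarrow> 'm) \<Rightarrow> 'v \<Rightarrow> 'm set set \<Rightarrow> 'm set set" where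
  "compactoid_born scale \<pi> B = {S. compactoid scale \<pi> B S}"

definition nuclear ::
  "('v::comm_ring_1 \<Rightarrow> 'm::ab_group_add \<Rightarrow> 'm) \<Rightarrow> 'v \<Rightarrow> 'm set set \<Rightarrow> bool" where
  "nuclear scale \<pi> B \<longleftrightarrow> (\<forall>S\<in>B. compactoid scale \<pi> B S)"

end

theory Submission
  imports Defs
begin


definition ssumd :: "'b::ab_group_add set \<Rightarrow> 'b set \<Rightarrow> 'b set" where
  "ssumd X Y = {a + b | a b. a \<in> X \<and> b \<in> Y}"

definition pTd :: "('a \<Rightarrow> 'b \<Rightarrow> 'b) \<Rightarrow> 'a \<Rightarrow> 'b set \<Rightarrow> 'b set" where
  "pTd sc c T = sc c ` T"

lemma ssumd_iff: "x \<in> ssumd X Y \<longleftrightarrow> (\<exists>a b. a \<in> X \<and> b \<in> Y \<and> x = a + b)"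
  unfolding ssumd_def by blast

lemma ssumdI: "a \<in> X \<Longrightarrow> b \<in> Y \<Longrightarrow> x = a + b \<Longrightarrow> x \<in> ssumd X Y"
  unfolding ssumd_def by blast

lemma ssumdE: "x \<in> ssumd X Y \<Longrightarrow> (\<And>a b. a \<in> X \<Longrightarrow> b \<in> Y \<Longrightarrow> x = a + b \<Longrightarrow> P) \<Longrightarrow> P"
  unfolding ssumd_def by blast

lemma pTd_iff: "x \<in> pTd sc c T \<longleftrightarrow> (\<exists>t\<in>T. x = sc c t)"
  unfolding pTd_def by blast

lemma pTdI: "t \<in> T \<Longrightarrow> x = sc c t \<Longrightarrow> x \<in> pTd sc c T"
  unfolding pTd_def by blast

lemma pTdE: "x \<in> pTd sc c T \<Longrightarrow> (\<And>t. t \<in> T \<Longrightarrow> x = sc c t \<Longrightarrow> P) \<Longrightarrow> P"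
  unfolding pTd_def by blast

lemma compactoid_alt: "compactoid scale \<pi> B S \<longleftrightarrow>
     (\<exists>T\<in>B. module.subspace scale T \<and> S \<subseteq> T \<and>
        (\<forall>n::nat. \<exists>F. finite F \<and> F \<subseteq> T \<and>
           S \<subseteq> ssumd (module.span scale F) (pTd scale (\<pi> ^ n) T)))"
  unfolding compactoid_def ssumd_def pTd_def by (rule refl)

lemma pi_adic_complete_alt: "pi_adic_complete scale \<pi> T \<longleftrightarrow>
     (\<Inter>n. pTd scale (\<pi> ^ n) T) = {0} \<and>
     (\<forall>x::nat \<Rightarrow> 'm::ab_group_add. (\<forall>n. x n \<in> T) \<longrightarrow>
        (\<forall>k. \<exists>N. \<forall>m\<ge>N. \<forall>n\<ge>N. x m - x n \<in> pTd scale (\<pi> ^ k) T) \<longrightarrow>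
        (\<exists>y\<in>T. \<forall>k. \<exists>N. \<forall>n\<ge>N. x n - y \<in> pTd scale (\<pi> ^ k) T))"
  unfolding pi_adic_complete_def pTd_def by (rule refl)

locale bmod = module s for s :: "'a::idom \<Rightarrow> 'b::ab_group_add \<Rightarrow> 'b" (infixr \<open>*s\<close> 75) +
  fixes \<pi> :: 'a and B :: "'b set set"
  assumes pi_nz: "\<pi> \<noteq> 0"
    and cbm: "complete_born_module s \<pi> B"
    and tf: "alg_torsionfree s"
begin

abbreviation pT :: "nat \<Rightarrow> 'b set \<Rightarrow> 'b set" where "pT n T \<equiv> pTd s (\<pi> ^ n) T"
abbreviation ssum :: "'b set \<Rightarrow> 'b set \<Rightarrow> 'b set" where
  "ssum X Y \<equiv> ssumd X Y"

lemma born: "bornology B" using cbm by (simp add: complete_born_module_def born_module_def)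
lemma fin_B: "finite S \<Longrightarrow> S \<in> B" using born by (simp add: bornology_def)
lemma un_B: "S \<in> B \<Longrightarrow> T \<in> B \<Longrightarrow> S \<union> T \<in> B" using born by (simp add: bornology_def)
lemma sub_B: "S \<in> B \<Longrightarrow> T \<subseteq> S \<Longrightarrow> T \<in> B" using born unfolding bornology_def by blast
lemma cpl_B: "S \<in> B \<Longrightarrow> \<exists>T\<in>B. subspace T \<and> pi_adic_complete s \<pi> T \<and> S \<subseteq> T"
  using cbm by (simp add: complete_born_module_def)

lemma pT_sub: assumes T: "subspace T" shows "subspace (pT n T)"
proof (rule subspaceI)
  show "0 \<in> pT n T" using T subspace_0 by (intro pTdI[of 0]) auto
  fix x y assume "x \<in> pT n T" "y \<in> pT n T"
  then obtain a b where "a \<in> T" "b \<in> T" "x = (\<pi>^n) *s a" "y = (\<pi>^n) *s b" by (auto elim!: pTdE)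
  then show "x + y \<in> pT n T" using T subspace_add by (intro pTdI[of "a+b"]) (auto simp: scale_right_distrib)
next
  fix c x assume "x \<in> pT n T"
  then obtain a where "a \<in> T" "x = (\<pi>^n) *s a" by (auto elim!: pTdE)
  then show "c *s x \<in> pT n T" using T subspace_scale by (intro pTdI[of "c *s a"]) (auto simp: mult.commute)
qed

lemma pT_in: "subspace T \<Longrightarrow> pT n T \<subseteq> T"
  using subspace_scale by (auto elim!: pTdE)

lemma pT_mem: "t \<in> T \<Longrightarrow> (\<pi>^n) *s t \<in> pT n T"
  by (rule pTdI) auto

lemma pT_mono: assumes T: "subspace T" and mn: "m \<le> n" shows "pT n T \<subseteq> pT m T"
proof
  fix x assume x: "x \<in> pT n T"
  then obtain t where t: "t \<in> T" "x = (\<pi>^n) *s t" by (auto elim!: pTdE)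
  have "x = (\<pi>^m) *s ((\<pi>^(n-m)) *s t)" using t mn by (simp add: power_add[symmetric])
  moreover have "(\<pi>^(n-m)) *s t \<in> T" using t T subspace_scale by blast
  ultimately show "x \<in> pT m T" by (intro pTdI)
qed

lemma pT_mono_set: "T \<subseteq> T' \<Longrightarrow> pT n T \<subseteq> pT n T'"
  by (auto simp: pTd_def)

lemma ssum_mono: "X \<subseteq> X' \<Longrightarrow> Y \<subseteq> Y' \<Longrightarrow> ssum X Y \<subseteq> ssum X' Y'"
  by (auto simp: ssumd_def)

lemma ssum_sub: assumes X: "subspace X" and Y: "subspace Y" shows "subspace (ssum X Y)"
proof (rule subspaceI)
  show "0 \<in> ssum X Y" using X Y subspace_0 by (intro ssumdI[of 0 _ 0]) auto
  fix x y assume "x \<in> ssum X Y" "y \<in> ssum X Y"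
  then obtain a b c d where "a \<in> X" "b \<in> Y" "c \<in> X" "d \<in> Y" "x = a + b" "y = c + d" by (auto elim!: ssumdE)
  moreover have "x + y = (a + c) + (b + d)" using calculation by (simp add: algebra_simps)
  ultimately show "x + y \<in> ssum X Y" using X Y subspace_add by (intro ssumdI[of "a+c" _ "b+d"]) auto
next
  fix c x assume "x \<in> ssum X Y"
  then obtain a b where "a \<in> X" "b \<in> Y" "x = a + b" by (auto elim!: ssumdE)
  then show "c *s x \<in> ssum X Y" using X Y subspace_scale by (intro ssumdI) (auto simp: scale_right_distrib)
qed

lemma ssum_in: assumes "subspace T" "X \<subseteq> T" "Y \<subseteq> T" shows "ssum X Y \<subseteq> T"
  using assms subspace_add[OF assms(1)] by (auto elim!: ssumdE)

lemma sep_zero: "pi_adic_complete s \<pi> T \<Longrightarrow> (\<And>r. z \<in> pT r T) \<Longrightarrow> z = 0"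
  unfolding pi_adic_complete_alt by blast

lemma tf_div: assumes T: "subspace T" and x: "x \<in> T" and h: "(\<pi>^k) *s x \<in> pT (k+r) T"
  shows "x \<in> pT r T"
proof -
  obtain t where t: "t \<in> T" "(\<pi>^k) *s x = (\<pi>^(k+r)) *s t" using h by (auto elim!: pTdE)
  have "(\<pi>^k) *s (x - (\<pi>^r) *s t) = 0"
    using t by (simp add: scale_right_diff_distrib power_add)
  moreover have "\<pi>^k \<noteq> 0" using pi_nz by simp
  ultimately have "x - (\<pi>^r) *s t = 0" using tf unfolding alg_torsionfree_def by blast
  then have "x = (\<pi>^r) *s t" by simp
  then show ?thesis using t by (intro pTdI)
qed

lemma bnd_sub: "S \<in> B \<Longrightarrow> \<exists>T\<in>B. subspace T \<and> S \<subseteq> T"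
  using cpl_B by blast

lemma compactoidI:
  assumes "T \<in> B" "subspace T" "S \<subseteq> T"
    "\<And>n. \<exists>F. finite F \<and> F \<subseteq> T \<and> S \<subseteq> ssum (span F) (pT n T)"
  shows "compactoid s \<pi> B S"
  unfolding compactoid_alt using assms by blast

lemma compactoidE:
  assumes "compactoid s \<pi> B S"
  obtains T F where "T \<in> B" "subspace T" "S \<subseteq> T"
    "\<And>n. finite (F n)" "\<And>n. F n \<subseteq> T" "\<And>n. S \<subseteq> ssum (span (F n)) (pT n T)"
proof -
  obtain T where T: "T \<in> B" "subspace T" "S \<subseteq> T"
    "\<forall>n. \<exists>F. finite F \<and> F \<subseteq> T \<and> S \<subseteq> ssum (span F) (pT n T)"
    using assms unfolding compactoid_alt by blast
  from T(4) have "\<exists>F. \<forall>n. finite (F n) \<and> F n \<subseteq> T \<and> S \<subseteq> ssum (span (F n)) (pT n T)"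
    by (rule choice)
  then obtain F where "\<forall>n. finite (F n) \<and> F n \<subseteq> T \<and> S \<subseteq> ssum (span (F n)) (pT n T)"
    by blast
  then show ?thesis using T that by blast
qed

lemma comp_subset: assumes "compactoid s \<pi> B S" "S' \<subseteq> S" shows "compactoid s \<pi> B S'"
proof -
  obtain T F where T: "T \<in> B" "subspace T" "S \<subseteq> T"
    "\<And>n. finite (F n)" "\<And>n. F n \<subseteq> T" "\<And>n. S \<subseteq> ssum (span (F n)) (pT n T)"
    by (rule compactoidE[OF assms(1)], rule that) assumption+
  show ?thesis
    apply (rule compactoidI[OF T(1,2)])
    using T assms(2) apply blast
    subgoal for n using T(4,5) order_trans[OF assms(2) T(6)[of n]] by blast
    done
qed

lemma comp_bounded: assumes "compactoid s \<pi> B S" shows "S \<in> B"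
proof -
  obtain T F where T: "T \<in> B" "subspace T" "S \<subseteq> T"
    "\<And>n. finite (F n)" "\<And>n. F n \<subseteq> T" "\<And>n. S \<subseteq> ssum (span (F n)) (pT n T)"
    by (rule compactoidE[OF assms(1)], rule that) assumption+
  then show ?thesis using sub_B by blast
qed

lemma comp_finite: assumes "finite S" shows "compactoid s \<pi> B S"
proof -
  obtain T where T: "T \<in> B" "subspace T" "S \<subseteq> T" using bnd_sub fin_B assms by blast
  show ?thesis
  proof (rule compactoidI[OF T])
    fix n
    have "S \<subseteq> ssum (span S) (pT n T)"
    proof
      fix x assume "x \<in> S"
      then have "x = x + (\<pi>^n) *s 0" "x \<in> span S" by (auto intro: span_base)
      moreover have "(\<pi>^n) *s 0 \<in> pT n T" using T(2) subspace_0 pT_mem by blast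
      ultimately show "x \<in> ssum (span S) (pT n T)" by (intro ssumdI)
    qed
    then show "\<exists>F. finite F \<and> F \<subseteq> T \<and> S \<subseteq> ssum (span F) (pT n T)" using assms T by blast
  qed
qed

lemma comp_sum:
  assumes A: "compactoid s \<pi> B A" and C: "compactoid s \<pi> B C"
  shows "compactoid s \<pi> B (ssum A C)"
proof -
  obtain TA FA where A1: "TA \<in> B" "subspace TA" "A \<subseteq> TA"
    "\<And>n. finite (FA n)" "\<And>n. FA n \<subseteq> TA" "\<And>n. A \<subseteq> ssum (span (FA n)) (pT n TA)"
    by (rule compactoidE[OF A], rule that) assumption+
  obtain TC FC where C1: "TC \<in> B" "subspace TC" "C \<subseteq> TC"
    "\<And>n. finite (FC n)" "\<And>n. FC n \<subseteq> TC" "\<And>n. C \<subseteq> ssum (span (FC n)) (pT n TC)"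
    by (rule compactoidE[OF C], rule that) assumption+
  obtain T where T: "T \<in> B" "subspace T" "TA \<union> TC \<subseteq> T" using bnd_sub un_B A1(1) C1(1) by metis
  show ?thesis
  proof (rule compactoidI[OF T(1,2)])
    show "ssum A C \<subseteq> T" using A1(3) C1(3) T by (intro ssum_in) auto
    fix n
    have "ssum A C \<subseteq> ssum (span (FA n \<union> FC n)) (pT n T)"
    proof
      fix x assume "x \<in> ssum A C"
      then obtain a c where x: "x = a + c" "a \<in> A" "c \<in> C" by (auto elim!: ssumdE)
      obtain a1 a2 where a: "a1 \<in> span (FA n)" "a2 \<in> pT n TA" "a = a1 + a2"
        using A1(6)[of n] x(2) by (auto elim!: ssumdE)
      obtain c1 c2 where c: "c1 \<in> span (FC n)" "c2 \<in> pT n TC" "c = c1 + c2"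
        using C1(6)[of n] x(3) by (auto elim!: ssumdE)
      have "a1 \<in> span (FA n \<union> FC n)" using a(1) span_mono[of "FA n" "FA n \<union> FC n"] by blast
      moreover have "c1 \<in> span (FA n \<union> FC n)" using c(1) span_mono[of "FC n" "FA n \<union> FC n"] by blast
      ultimately have "a1 + c1 \<in> span (FA n \<union> FC n)" by (rule span_add)
      moreover have "a2 \<in> pT n T" "c2 \<in> pT n T" using a(2) c(2) pT_mono_set[of _ T] T(3) by auto
      then have "a2 + c2 \<in> pT n T" using pT_sub[OF T(2)] subspace_add by blast
      moreover have "x = (a1 + c1) + (a2 + c2)" using x a c by (simp add: algebra_simps)
      ultimately show "x \<in> ssum (span (FA n \<union> FC n)) (pT n T)" by (intro ssumdI)
    qed
    moreover have "finite (FA n \<union> FC n)" "FA n \<union> FC n \<subseteq> T"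
      using A1(4,5)[of n] C1(4,5)[of n] T(3) by auto
    ultimately show "\<exists>F. finite F \<and> F \<subseteq> T \<and> ssum A C \<subseteq> ssum (span F) (pT n T)"
      by blast
  qed
qed

lemma comp_ins0: assumes A: "compactoid s \<pi> B A" shows "compactoid s \<pi> B (insert 0 A)"
proof -
  obtain TA FA where A1: "TA \<in> B" "subspace TA" "A \<subseteq> TA"
    "\<And>n. finite (FA n)" "\<And>n. FA n \<subseteq> TA" "\<And>n. A \<subseteq> ssum (span (FA n)) (pT n TA)"
    by (rule compactoidE[OF A], rule that) assumption+
  show ?thesis
  proof (rule compactoidI[OF A1(1,2)])
    show "insert 0 A \<subseteq> TA" using A1(2,3) subspace_0 by blast
    fix n
    have "(0::'b) = 0 + (\<pi>^n) *s 0" by simp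
    then have "0 \<in> ssum (span (FA n)) (pT n TA)" using span_zero A1(2) subspace_0 pT_mem
      by (intro ssumdI) auto
    then have "insert 0 A \<subseteq> ssum (span (FA n)) (pT n TA)"
      using A1(6)[of n] by (simp only: insert_subset)
    then show "\<exists>F. finite F \<and> F \<subseteq> TA \<and> insert 0 A \<subseteq> ssum (span F) (pT n TA)"
      using A1(4,5)[of n] by blast
  qed
qed

lemma comp_union:
  assumes A: "compactoid s \<pi> B A" and C: "compactoid s \<pi> B C"
  shows "compactoid s \<pi> B (A \<union> C)"
proof -
  have "compactoid s \<pi> B (ssum (insert 0 A) (insert 0 C))"
    using comp_sum[OF comp_ins0[OF A] comp_ins0[OF C]] .
  moreover have "A \<union> C \<subseteq> ssum (insert 0 A) (insert 0 C)"
  proof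
    fix x assume "x \<in> A \<union> C"
    then show "x \<in> ssum (insert 0 A) (insert 0 C)"
    proof (elim UnE)
      assume "x \<in> A" then show ?thesis by (intro ssumdI[of x _ 0]) auto
    next
      assume "x \<in> C" then show ?thesis by (intro ssumdI[of 0 _ x]) auto
    qed
  qed
  ultimately show ?thesis using comp_subset by blast
qed


lemma pT_scale_in: assumes T: "subspace T" and z: "z \<in> pT r T" shows "c *s z \<in> pT r T"
  using pT_sub[OF T] z subspace_scale by blast

lemma comp_complete:
  assumes A: "compactoid s \<pi> B S"
  shows "\<exists>W. compactoid s \<pi> B W \<and> subspace W \<and> pi_adic_complete s \<pi> W \<and> S \<subseteq> W"
proof -
  obtain T0 F where A1: "T0 \<in> B" "subspace T0" "S \<subseteq> T0"
    "\<And>n. finite (F n)" "\<And>n. F n \<subseteq> T0" "\<And>n. S \<subseteq> ssum (span (F n)) (pT n T0)"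
    by (rule compactoidE[OF A], rule that) assumption+
  obtain T where T: "T \<in> B" "subspace T" "pi_adic_complete s \<pi> T" "T0 \<subseteq> T"
    using cpl_B[OF A1(1)] by blast
  have FT: "\<And>n. F n \<subseteq> T" using A1(5) T(4) by blast
  define W where "W = {x \<in> T. \<forall>n. x \<in> ssum (span (F n)) (pT n T)}"
  have WT: "W \<subseteq> T" unfolding W_def by blast
  have SW: "S \<subseteq> W"
  proof
    fix x assume x: "x \<in> S"
    have "x \<in> ssum (span (F n)) (pT n T)" for n
    proof -
      have "x \<in> ssum (span (F n)) (pT n T0)" using A1(6)[of n] x by (rule subsetD)
      then show ?thesis using ssum_mono[OF order_refl pT_mono_set[OF T(4)]] by (rule rev_subsetD)
    qed
    then show "x \<in> W" using x A1(3) T(4) unfolding W_def by blast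
  qed
  have WB: "W \<in> B" using sub_B[OF T(1) WT] .
  have subW: "subspace W"
  proof (rule subspaceI)
    have "\<And>n. subspace (ssum (span (F n)) (pT n T))" using ssum_sub pT_sub[OF T(2)] by blast
    note ss = this
    show "0 \<in> W" unfolding W_def using ss subspace_0 T(2) by blast
    fix x y assume "x \<in> W" "y \<in> W"
    then show "x + y \<in> W" unfolding W_def using ss subspace_add T(2) by blast
  next
    have "\<And>n. subspace (ssum (span (F n)) (pT n T))" using ssum_sub pT_sub[OF T(2)] by blast
    note ss = this
    fix c x assume "x \<in> W"
    then show "c *s x \<in> W" unfolding W_def using ss subspace_scale T(2) by blast
  qed
  have compW: "compactoid s \<pi> B W"
  proof (rule compactoidI[OF T(1,2) WT])
    fix n
    have "W \<subseteq> ssum (span (F n)) (pT n T)" unfolding W_def by auto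
    then show "\<exists>F. finite F \<and> F \<subseteq> T \<and> W \<subseteq> ssum (span F) (pT n T)"
      using A1(4)[of n] FT[of n] by (intro exI[of _ "F n"] conjI)
  qed
  have sepT: "\<And>z. (\<And>r. z \<in> pT r T) \<Longrightarrow> z = 0" by (rule sep_zero[OF T(3)])
  have cplT: "\<And>x :: nat \<Rightarrow> 'b. (\<forall>n. x n \<in> T) \<Longrightarrow> (\<forall>k. \<exists>N. \<forall>m\<ge>N. \<forall>n\<ge>N. x m - x n \<in> pT k T) \<Longrightarrow>
        (\<exists>y\<in>T. \<forall>k. \<exists>N. \<forall>n\<ge>N. x n - y \<in> pT k T)"
  proof -
    fix x :: "nat \<Rightarrow> 'b"
    assume a1: "\<forall>n. x n \<in> T" and a2: "\<forall>k. \<exists>N. \<forall>m\<ge>N. \<forall>n\<ge>N. x m - x n \<in> pT k T"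
    have "\<forall>x::nat \<Rightarrow> 'b. (\<forall>n. x n \<in> T) \<longrightarrow>
        (\<forall>k. \<exists>N. \<forall>m\<ge>N. \<forall>n\<ge>N. x m - x n \<in> pT k T) \<longrightarrow>
        (\<exists>y\<in>T. \<forall>k. \<exists>N. \<forall>n\<ge>N. x n - y \<in> pT k T)"
      using T(3) unfolding pi_adic_complete_alt by (rule conjunct2)
    then show "\<exists>y\<in>T. \<forall>k. \<exists>N. \<forall>n\<ge>N. x n - y \<in> pT k T" using a1 a2 by blast
  qed
  have Wclosed: "y \<in> W" if xW: "\<forall>n. x n \<in> W" and yT: "y \<in> T"
      and conv: "\<forall>k. \<exists>N. \<forall>n\<ge>N. x n - y \<in> pT k T" for x :: "nat \<Rightarrow> 'b" and y
  proof -
    have "y \<in> ssum (span (F k)) (pT k T)" for k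
    proof -
      obtain N where N: "\<forall>n\<ge>N. x n - y \<in> pT k T" using conv by blast
      then have d: "x N - y \<in> pT k T" by blast
      have "x N \<in> ssum (span (F k)) (pT k T)" using xW unfolding W_def by blast
      then obtain a b where ab: "a \<in> span (F k)" "b \<in> pT k T" "x N = a + b" by (rule ssumdE)
      have "b - (x N - y) \<in> pT k T" using ab(2) d pT_sub[OF T(2)] subspace_diff by blast
      moreover have "y = a + (b - (x N - y))" using ab(3) by (simp add: algebra_simps)
      ultimately show ?thesis using ab(1) by (intro ssumdI)
    qed
    then show ?thesis unfolding W_def using yT by blast
  qed
  have cplW: "\<exists>y\<in>W. \<forall>k. \<exists>N. \<forall>n\<ge>N. x n - y \<in> pT k W"
    if xW: "\<forall>n. x n \<in> W" and cau: "\<forall>k. \<exists>N. \<forall>m\<ge>N. \<forall>n\<ge>N. x m - x n \<in> pT k W" for x :: "nat \<Rightarrow> 'b"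
  proof -
    have xT: "\<forall>n. x n \<in> T" using xW WT by blast
    have "\<forall>k. \<exists>N. \<forall>m\<ge>N. \<forall>n\<ge>N. x m - x n \<in> pT k T"
    proof
      fix k
      obtain N where "\<forall>m\<ge>N. \<forall>n\<ge>N. x m - x n \<in> pT k W" using cau by blast
      then have "\<forall>m\<ge>N. \<forall>n\<ge>N. x m - x n \<in> pT k T" using pT_mono_set[OF WT, of k] by (meson subsetD)
      then show "\<exists>N. \<forall>m\<ge>N. \<forall>n\<ge>N. x m - x n \<in> pT k T" by blast
    qed
    then obtain y where yT: "y \<in> T" and conv: "\<forall>k. \<exists>N. \<forall>n\<ge>N. x n - y \<in> pT k T"
      using cplT[OF xT] by blast
    have yW: "y \<in> W" using Wclosed[OF xW yT conv] .
    have "\<exists>N. \<forall>m\<ge>N. x m - y \<in> pT k W" for k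
    proof -
      obtain N where N: "\<forall>m\<ge>N. \<forall>n\<ge>N. x m - x n \<in> pT k W" using cau by blast
      have "x m - y \<in> pT k W" if m: "m \<ge> N" for m
      proof -
        have "\<forall>j. \<exists>w. w \<in> W \<and> x m - x (N + j) = (\<pi>^k) *s w"
        proof
          fix j
          have "x m - x (N + j) \<in> pT k W" using N m by simp
          then show "\<exists>w. w \<in> W \<and> x m - x (N + j) = (\<pi>^k) *s w" by (auto elim!: pTdE)
        qed
        then have "\<exists>v. \<forall>j. v j \<in> W \<and> x m - x (N + j) = (\<pi>^k) *s v j" by (rule choice)
        then obtain v where v0: "\<forall>j. v j \<in> W \<and> x m - x (N + j) = (\<pi>^k) *s v j" by blast
        have v: "\<And>j. v j \<in> W" "\<And>j. x m - x (N + j) = (\<pi>^k) *s v j" using v0 by auto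
        have vT: "\<forall>j. v j \<in> T" using v(1) WT by blast
        have "\<exists>M. \<forall>j1\<ge>M. \<forall>j2\<ge>M. v j1 - v j2 \<in> pT r T" for r
        proof -
          obtain M where M: "\<forall>n\<ge>M. x n - y \<in> pT (k + r) T" using conv by blast
          have "v j1 - v j2 \<in> pT r T" if "j1 \<ge> M" "j2 \<ge> M" for j1 j2
          proof (rule tf_div[OF T(2)])
            show "v j1 - v j2 \<in> T" using vT T(2) subspace_diff by blast
            have "(\<pi>^k) *s (v j1 - v j2) = (x (N + j2) - y) - (x (N + j1) - y)"
              using v(2)[of j1] v(2)[of j2] by (simp add: scale_right_diff_distrib algebra_simps)
            moreover have "x (N + j2) - y \<in> pT (k + r) T" "x (N + j1) - y \<in> pT (k + r) T"
              using M that by auto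
            ultimately show "(\<pi>^k) *s (v j1 - v j2) \<in> pT (k + r) T"
              using pT_sub[OF T(2)] subspace_diff by metis
          qed
          then show ?thesis by blast
        qed
        then obtain w0 where w0T: "w0 \<in> T" and convv: "\<forall>r. \<exists>M. \<forall>j\<ge>M. v j - w0 \<in> pT r T"
          using cplT[OF vT] by blast
        have w0W: "w0 \<in> W" using Wclosed[OF _ w0T convv] v(1) by blast
        have "x m - y - (\<pi>^k) *s w0 = 0"
        proof (rule sepT)
          fix r
          obtain M1 where M1: "\<forall>j\<ge>M1. v j - w0 \<in> pT r T" using convv by blast
          obtain M2 where M2: "\<forall>n\<ge>M2. x n - y \<in> pT r T" using conv by blast
          define j where "j = max M1 M2"
          have a: "(\<pi>^k) *s (v j - w0) \<in> pT r T"
            using M1 j_def pT_scale_in[OF T(2)] by simp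
          have b: "x (N + j) - y \<in> pT r T" using M2 j_def by simp
          have "x m - y - (\<pi>^k) *s w0 = (\<pi>^k) *s (v j - w0) + (x (N + j) - y)"
            using v(2)[of j] by (simp add: scale_right_diff_distrib algebra_simps)
          then show "x m - y - (\<pi>^k) *s w0 \<in> pT r T"
            using a b pT_sub[OF T(2)] subspace_add by metis
        qed
        then have "x m - y = (\<pi>^k) *s w0" by simp
        then show ?thesis using w0W by (intro pTdI)
      qed
      then show ?thesis by blast
    qed
    then show ?thesis using yW by blast
  qed
  have "pi_adic_complete s \<pi> W"
    unfolding pi_adic_complete_alt
  proof (intro conjI allI impI)
    show "(\<Inter>n. pT n W) = {0}"
    proof
      show "(\<Inter>n. pT n W) \<subseteq> {0}"
      proof
        fix z assume "z \<in> (\<Inter>n. pT n W)"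
        then have "\<And>r. z \<in> pT r T" using pT_mono_set[OF WT] by blast
        then show "z \<in> {0}" using sepT by blast
      qed
      show "{0} \<subseteq> (\<Inter>n. pT n W)"
        using subspace_0[OF subW] pT_mem[of 0 W] by auto
    qed
    fix x :: "nat \<Rightarrow> 'b"
    assume "\<forall>n. x n \<in> W" "\<forall>k. \<exists>N. \<forall>m\<ge>N. \<forall>n\<ge>N. x m - x n \<in> pT k W"
    then show "\<exists>y\<in>W. \<forall>k. \<exists>N. \<forall>n\<ge>N. x n - y \<in> pT k W" by (rule cplW)
  qed
  then show ?thesis using compW subW SW by blast
qed

end



locale dvrmod = module s for s :: "'a::idom \<Rightarrow> 'b::ab_group_add \<Rightarrow> 'b" (infixr \<open>*s\<close> 75) +
  fixes \<pi> :: 'a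
  assumes dvr: "dvr_uniformiser \<pi>"
begin

lemma val: "c \<noteq> 0 \<Longrightarrow> \<exists>u n. u dvd 1 \<and> c = u * \<pi> ^ n"
  using dvr unfolding dvr_uniformiser_def by blast

lemma noeth: "finite F \<Longrightarrow> subspace N \<Longrightarrow> N \<subseteq> span F \<Longrightarrow> \<exists>G. finite G \<and> G \<subseteq> N \<and> N \<subseteq> span G"
proof (induction F arbitrary: N rule: finite_induct)
  case empty
  then show ?case by (intro exI[of _ "{}"]) auto
next
  case (insert x F)
  define I where "I = {c. \<exists>m \<in> span F. m + c *s x \<in> N}"
  have dec: "\<exists>k. y - k *s x \<in> span F \<and> k \<in> I" if y: "y \<in> N" for y
  proof -
    have "y \<in> span (insert x F)" using y insert.prems(2) by blast
    then obtain k where k: "y - k *s x \<in> span F" using span_breakdown_eq by blast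
    have "(y - k *s x) + k *s x \<in> N" using y by simp
    then have "k \<in> I" using k unfolding I_def by blast
    then show ?thesis using k by blast
  qed
  show ?case
  proof (cases "\<exists>c\<in>I. c \<noteq> 0")
    case False
    have "N \<subseteq> span F"
    proof
      fix y assume y: "y \<in> N"
      obtain k where "y - k *s x \<in> span F" "k \<in> I" using dec[OF y] by blast
      then have "k = 0" using False by blast
      then show "y \<in> span F" using \<open>y - k *s x \<in> span F\<close> by simp
    qed
    then show ?thesis by (rule insert.IH[OF insert.prems(1)])
  next
    case True
    define P where "P n \<longleftrightarrow> (\<exists>c\<in>I. c \<noteq> 0 \<and> (\<exists>u. u dvd 1 \<and> c = u * \<pi> ^ n))" for n
    have "\<exists>n. P n"
    proof -
      obtain c where c: "c \<in> I" "c \<noteq> 0" using True by blast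
      obtain u n where "u dvd 1" "c = u * \<pi> ^ n" using val[OF c(2)] by blast
      then have "P n" unfolding P_def using c by blast
      then show ?thesis by blast
    qed
    define n0 where "n0 = (LEAST n. P n)"
    have "P n0" unfolding n0_def using \<open>\<exists>n. P n\<close> by (rule LeastI_ex)
    then obtain c0 u0 where c0: "c0 \<in> I" "c0 \<noteq> 0" "u0 dvd 1" "c0 = u0 * \<pi> ^ n0"
      unfolding P_def by blast
    obtain m0 where m0: "m0 \<in> span F" "m0 + c0 *s x \<in> N" using c0(1) unfolding I_def by blast
    define y0 where "y0 = m0 + c0 *s x"
    obtain w where w: "1 = u0 * w" using c0(3) unfolding dvd_def by blast
    have div: "\<exists>d. c = d * c0" if c: "c \<in> I" for c
    proof (cases "c = 0")
      case True then show ?thesis by (intro exI[of _ 0]) simp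
    next
      case False
      then obtain u n where u: "u dvd 1" "c = u * \<pi> ^ n" using val by blast
      have "P n" unfolding P_def using c False u by blast
      then have "n0 \<le> n" unfolding n0_def by (rule Least_le)
      then have pn: "\<pi> ^ n = \<pi> ^ (n - n0) * \<pi> ^ n0" by (simp add: power_add[symmetric])
      have "(u * w * \<pi> ^ (n - n0)) * c0 = u * (u0 * w) * (\<pi> ^ (n - n0) * \<pi> ^ n0)"
        using c0(4) by (simp add: mult_ac)
      also have "\<dots> = c" using w pn u(2) by simp
      finally show ?thesis by (intro exI[of _ "u * w * \<pi> ^ (n - n0)"]) (rule sym)
    qed
    have subN': "subspace (N \<inter> span F)" using insert.prems(1) subspace_inter by blast
    obtain G' where G': "finite G'" "G' \<subseteq> N \<inter> span F" "N \<inter> span F \<subseteq> span G'"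
      using insert.IH[OF subN'] by blast
    have "N \<subseteq> span (insert y0 G')"
    proof
      fix y assume y: "y \<in> N"
      obtain k where k: "y - k *s x \<in> span F" "k \<in> I" using dec[OF y] by blast
      obtain d where d: "k = d * c0" using div[OF k(2)] by blast
      have eq: "y - d *s y0 = (y - k *s x) - d *s m0"
        unfolding y0_def d by (simp add: scale_right_distrib algebra_simps)
      have "y - d *s y0 \<in> span F" unfolding eq using k(1) m0(1) span_diff span_scale by blast
      moreover have "y - d *s y0 \<in> N" using y m0(2) insert.prems(1) subspace_diff subspace_scale
        unfolding y0_def by blast
      ultimately have "y - d *s y0 \<in> span G'" using G'(3) by blast
      then have "y - d *s y0 \<in> span (insert y0 G')" using span_mono[of G' "insert y0 G'"] by blast
      moreover have "d *s y0 \<in> span (insert y0 G')" by (intro span_scale span_base) simp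
      ultimately have "(y - d *s y0) + d *s y0 \<in> span (insert y0 G')" by (rule span_add)
      then show "y \<in> span (insert y0 G')" by simp
    qed
    moreover have "insert y0 G' \<subseteq> N" using G'(2) m0(2) unfolding y0_def by blast
    ultimately show ?thesis using G'(1) by blast
  qed
qed

end



context bmod begin

lemma cb_complete: "complete_born_module s \<pi> (compactoid_born s \<pi> B)"
proof -
  have m: "module s" by (rule module_axioms)
  have b: "bornology (compactoid_born s \<pi> B)"
    unfolding bornology_def compactoid_born_def
    using comp_finite comp_union comp_subset by blast
  have c: "\<forall>S\<in>compactoid_born s \<pi> B. \<exists>T\<in>compactoid_born s \<pi> B. subspace T \<and> pi_adic_complete s \<pi> T \<and> S \<subseteq> T"
    unfolding compactoid_born_def using comp_complete by blast
  then have d: "\<forall>S\<in>compactoid_born s \<pi> B. \<exists>T\<in>compactoid_born s \<pi> B. subspace T \<and> S \<subseteq> T"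
    by blast
  show ?thesis unfolding complete_born_module_def born_module_def using m b c d by blast
qed

end

lemma comp_image:
  assumes b1: "bmod s1 \<pi> B1" and b2: "bmod s2 \<pi> B2" and hh: "module_hom s1 s2 h"
    and bd: "bounded_map B1 B2 h" and S: "compactoid s1 \<pi> B1 S"
  shows "compactoid s2 \<pi> B2 (h ` S)"
proof -
  interpret b1: bmod s1 \<pi> B1 by (rule b1)
  interpret b2: bmod s2 \<pi> B2 by (rule b2)
  interpret hh: module_hom s1 s2 h by (rule hh)
  obtain T F where T: "T \<in> B1" "b1.subspace T" "S \<subseteq> T"
    "\<And>n. finite (F n)" "\<And>n. F n \<subseteq> T" "\<And>n. S \<subseteq> b1.ssum (b1.span (F n)) (b1.pT n T)"
    by (rule b1.compactoidE[OF S], rule that) assumption+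
  have hT: "h ` T \<in> B2" using bd T(1) unfolding bounded_map_def by blast
  have sT: "b2.subspace (h ` T)" using hh.subspace_image[OF T(2)] .
  show ?thesis
  proof (rule b2.compactoidI[OF hT sT])
    show "h ` S \<subseteq> h ` T" using T(3) by blast
    fix n
    have "h ` S \<subseteq> b2.ssum (b2.span (h ` F n)) (b2.pT n (h ` T))"
    proof
      fix y assume "y \<in> h ` S"
      then obtain x where x: "x \<in> S" "y = h x" by blast
      have "x \<in> b1.ssum (b1.span (F n)) (b1.pT n T)" using T(6) x(1) by blast
      then obtain a b where ab: "a \<in> b1.span (F n)" "b \<in> b1.pT n T" "x = a + b" by (rule ssumdE)
      obtain t where t: "t \<in> T" "b = s1 (\<pi>^n) t" using ab(2) by (rule pTdE)
      have "h a \<in> b2.span (h ` F n)" using ab(1) hh.span_image by blast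
      moreover have "h b \<in> b2.pT n (h ` T)" using t hh.scale by (intro pTdI[of "h t"]) auto
      moreover have "y = h a + h b" using x ab hh.add by simp
      ultimately show "y \<in> b2.ssum (b2.span (h ` F n)) (b2.pT n (h ` T))" by (intro ssumdI)
    qed
    moreover have "finite (h ` F n)" "h ` F n \<subseteq> h ` T" using T(4,5) by auto
    ultimately show "\<exists>F. finite F \<and> F \<subseteq> h ` T \<and> h ` S \<subseteq> b2.ssum (b2.span F) (b2.pT n (h ` T))"
      by blast
  qed
qed




locale bext = K: bmod sK \<pi> BK + L: bmod sL \<pi> BL + P: bmod sP \<pi> BP
  for sK :: "'a::idom \<Rightarrow> 'k::ab_group_add \<Rightarrow> 'k" and sL :: "'a \<Rightarrow> 'l::ab_group_add \<Rightarrow> 'l"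
    and sP :: "'a \<Rightarrow> 'p::ab_group_add \<Rightarrow> 'p" and \<pi> BK BL BP +
  fixes f :: "'k \<Rightarrow> 'l" and g :: "'l \<Rightarrow> 'p"
  assumes ext: "born_extension sK BK sL BL sP BP f g" and dvr: "dvr_uniformiser \<pi>"
begin

lemma hf_ax: "module_hom sK sL f" using ext unfolding born_extension_def by simp
lemma hg_ax: "module_hom sL sP g" using ext unfolding born_extension_def by simp

sublocale hf: module_hom sK sL f by (rule hf_ax)
sublocale hg: module_hom sL sP g by (rule hg_ax)
sublocale Kd: dvrmod sK \<pi> by unfold_locales (rule dvr)
sublocale Ld: dvrmod sL \<pi> by unfold_locales (rule dvr)

lemma bf: "bounded_map BK BL f" using ext unfolding born_extension_def by simp
lemma bg: "bounded_map BL BP g" using ext unfolding born_extension_def by simp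
lemma injf: "inj f" using ext unfolding born_extension_def by simp
lemma ker: "range f = {y. g y = 0}" using ext unfolding born_extension_def by simp
lemma surjg: "surj g" using ext unfolding born_extension_def by simp
lemma emb: "S \<in> BK \<longleftrightarrow> f ` S \<in> BL" using ext unfolding born_extension_def by simp
lemma quot: "S \<in> BP \<Longrightarrow> \<exists>T\<in>BL. S = g ` T" using ext unfolding born_extension_def by simp

lemma gf: "g (f k) = 0"
proof -
  have "f k \<in> range f" by (rule rangeI)
  then show ?thesis unfolding ker by simp
qed
lemma kerE: assumes "g y = 0" shows "\<exists>k. y = f k"
proof -
  have "y \<in> {y. g y = 0}" using assms by simp
  then have "y \<in> range f" unfolding ker .
  then show ?thesis by blast
qed

lemma killp: assumes "sP (\<pi>^n) p = 0" shows "p = 0"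
proof -
  have "\<pi>^n \<noteq> 0" using K.pi_nz by simp
  moreover have "\<forall>c x. c \<noteq> 0 \<longrightarrow> sP c x = 0 \<longrightarrow> x = 0" using P.tf unfolding alg_torsionfree_def .
  ultimately show ?thesis using assms by blast
qed

lemma emb_comp:
  assumes fS: "compactoid sL \<pi> BL (f ` S)"
  shows "compactoid sK \<pi> BK S"
proof -
  obtain T F where T: "T \<in> BL" "L.subspace T" "f ` S \<subseteq> T"
    "\<And>n. finite (F n)" "\<And>n. F n \<subseteq> T" "\<And>n. f ` S \<subseteq> L.ssum (L.span (F n)) (L.pT n T)"
    by (rule L.compactoidE[OF fS], rule that) assumption+
  define TK where "TK = f -` T"
  have "f ` TK \<subseteq> T" unfolding TK_def by blast
  then have "f ` TK \<in> BL" using L.sub_B T(1) by blast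
  then have TKB: "TK \<in> BK" using emb by blast
  have TKs: "K.subspace TK" unfolding TK_def using hf.subspace_vimage[OF T(2)] .
  have STK: "S \<subseteq> TK" using T(3) unfolding TK_def by blast
  have spT: "L.span (F n) \<subseteq> T" for n using L.span_minimal[OF T(5) T(2)] .
  show ?thesis
  proof (rule K.compactoidI[OF TKB TKs STK])
    fix n
    define A where "A = {a \<in> L.span (F n). \<exists>k t. t \<in> T \<and> a = f k + sL (\<pi>^n) t}"
    have Asub: "L.subspace A"
    proof (rule L.subspaceI)
      have "(0::'l) = f 0 + sL (\<pi>^n) 0" by simp
      then show "0 \<in> A" unfolding A_def using L.span_zero L.subspace_0[OF T(2)] by blast
    next
      fix x y assume "x \<in> A" "y \<in> A"
      then obtain k1 t1 k2 t2 where a: "x \<in> L.span (F n)" "t1 \<in> T" "x = f k1 + sL (\<pi>^n) t1"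
        "y \<in> L.span (F n)" "t2 \<in> T" "y = f k2 + sL (\<pi>^n) t2" unfolding A_def by blast
      have "x + y = f (k1 + k2) + sL (\<pi>^n) (t1 + t2)"
        using a by (simp add: hf.add L.scale_right_distrib algebra_simps)
      moreover have "t1 + t2 \<in> T" using a T(2) L.subspace_add by blast
      moreover have "x + y \<in> L.span (F n)" using a L.span_add by blast
      ultimately show "x + y \<in> A" unfolding A_def by blast
    next
      fix c x assume "x \<in> A"
      then obtain k t where a: "x \<in> L.span (F n)" "t \<in> T" "x = f k + sL (\<pi>^n) t" unfolding A_def by blast
      have "sL c x = f (sK c k) + sL (\<pi>^n) (sL c t)"
        using a by (simp add: hf.scale L.scale_right_distrib mult.commute)
      moreover have "sL c t \<in> T" using a T(2) L.subspace_scale by blast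
      moreover have "sL c x \<in> L.span (F n)" using a L.span_scale by blast
      ultimately show "sL c x \<in> A" unfolding A_def by blast
    qed
    have AF: "A \<subseteq> L.span (F n)" unfolding A_def by blast
    obtain G where G: "finite G" "G \<subseteq> A" "A \<subseteq> L.span G" using Ld.noeth[OF T(4) Asub AF] by blast
    have "\<forall>a\<in>G. \<exists>k. \<exists>t. t \<in> T \<and> a = f k + sL (\<pi>^n) t" using G(2) unfolding A_def by blast
    then have "\<exists>kf. \<forall>a\<in>G. \<exists>t. t \<in> T \<and> a = f (kf a) + sL (\<pi>^n) t" by (rule bchoice)
    then obtain kf where kf: "\<forall>a\<in>G. \<exists>t. t \<in> T \<and> a = f (kf a) + sL (\<pi>^n) t" by blast
    define Gk where "Gk = kf ` G"
    have Gkfin: "finite Gk" unfolding Gk_def using G(1) by blast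
    have GkTK: "Gk \<subseteq> TK"
    proof
      fix k assume "k \<in> Gk"
      then obtain a where a: "a \<in> G" "k = kf a" unfolding Gk_def by blast
      obtain t where t: "t \<in> T" "a = f k + sL (\<pi>^n) t" using kf a by blast
      have "a \<in> T" using a(1) G(2) AF spT by blast
      moreover have "sL (\<pi>^n) t \<in> T" using t(1) T(2) L.subspace_scale by blast
      ultimately have "a - sL (\<pi>^n) t \<in> T" using T(2) L.subspace_diff by blast
      moreover have "f k = a - sL (\<pi>^n) t" using t(2) by simp
      ultimately show "k \<in> TK" unfolding TK_def by simp
    qed
    have claim: "\<exists>k\<in>K.span Gk. \<exists>t\<in>T. a = f k + sL (\<pi>^n) t" if a: "a \<in> L.span G" for a
      using a
    proof (induction rule: L.span_induct_alt)
      case base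
      have "(0::'l) = f 0 + sL (\<pi>^n) 0" by simp
      then show ?case using K.span_zero L.subspace_0[OF T(2)] by blast
    next
      case (step c x y)
      obtain k t where kt: "k \<in> K.span Gk" "t \<in> T" "y = f k + sL (\<pi>^n) t" using step.IH by blast
      obtain tx where tx: "tx \<in> T" "x = f (kf x) + sL (\<pi>^n) tx" using kf step.hyps by blast
      have kx: "kf x \<in> K.span Gk" unfolding Gk_def using step.hyps K.span_base by blast
      have "sL c x = sL c (f (kf x) + sL (\<pi>^n) tx)" using tx(2) by (rule arg_cong)
      also have "\<dots> = f (sK c (kf x)) + sL (\<pi>^n) (sL c tx)"
        by (simp add: hf.scale L.scale_right_distrib mult.commute)
      finally have "sL c x + y = f (sK c (kf x) + k) + sL (\<pi>^n) (sL c tx + t)"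
        using kt(3) by (simp add: hf.add L.scale_right_distrib algebra_simps)
      moreover have "sK c (kf x) + k \<in> K.span Gk" using kx kt(1) K.span_add K.span_scale by blast
      moreover have "sL c tx + t \<in> T" using tx(1) kt(2) T(2) L.subspace_add L.subspace_scale by blast
      ultimately show ?case by blast
    qed
    have "S \<subseteq> K.ssum (K.span Gk) (K.pT n TK)"
    proof
      fix x assume x: "x \<in> S"
      have "f x \<in> L.ssum (L.span (F n)) (L.pT n T)" using T(6)[of n] x by (meson image_eqI subsetD)
      then obtain a b where ab: "a \<in> L.span (F n)" "b \<in> L.pT n T" "f x = a + b" by (rule ssumdE)
      obtain t where t: "t \<in> T" "b = sL (\<pi>^n) t" using ab(2) by (rule pTdE)
      have "a = f x + sL (\<pi>^n) (- t)" using ab(3) t(2) by (simp add: L.scale_minus_right)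
      moreover have "- t \<in> T" using t(1) T(2) L.subspace_neg by blast
      ultimately have "a \<in> A" unfolding A_def using ab(1) by blast
      then have "a \<in> L.span G" using G(3) by blast
      then obtain k t' where kt: "k \<in> K.span Gk" "t' \<in> T" "a = f k + sL (\<pi>^n) t'" using claim by blast
      define t2 where "t2 = t' + t"
      have t2T: "t2 \<in> T" unfolding t2_def using kt(2) t(1) T(2) L.subspace_add by blast
      have fe: "f (x - k) = sL (\<pi>^n) t2"
        unfolding t2_def using ab(3) t(2) kt(3) by (simp add: hf.diff L.scale_right_distrib algebra_simps)
      have "sP (\<pi>^n) (g t2) = g (f (x - k))" using fe hg.scale by simp
      also have "\<dots> = 0" by (rule gf)
      finally have "g t2 = 0" by (rule killp)
      then obtain k2 where k2: "t2 = f k2" using kerE by blast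
      have "f (x - k) = f (sK (\<pi>^n) k2)" using fe k2 hf.scale by simp
      then have "x - k = sK (\<pi>^n) k2" using injf unfolding inj_def by blast
      moreover have "k2 \<in> TK" unfolding TK_def using k2 t2T by simp
      ultimately have "x = k + sK (\<pi>^n) k2" "sK (\<pi>^n) k2 \<in> K.pT n TK"
        by (auto simp: algebra_simps intro: pTdI)
      then show "x \<in> K.ssum (K.span Gk) (K.pT n TK)" using kt(1) by (intro ssumdI)
    qed
    then show "\<exists>F. finite F \<and> F \<subseteq> TK \<and> S \<subseteq> K.ssum (K.span F) (K.pT n TK)"
      using Gkfin GkTK by (intro exI[of _ Gk] conjI)
  qed
qed

end



context bext begin

lemma lift_comp:
  assumes cS: "compactoid sP \<pi> BP S"
  shows "\<exists>W. compactoid sL \<pi> BL W \<and> S = g ` W"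
proof -
  obtain TP F where TP: "TP \<in> BP" "P.subspace TP" "S \<subseteq> TP"
    "\<And>n. finite (F n)" "\<And>n. F n \<subseteq> TP" "\<And>n. S \<subseteq> P.ssum (P.span (F n)) (P.pT n TP)"
    by (rule P.compactoidE[OF cS], rule that) assumption+
  obtain TL0 where TL0: "TL0 \<in> BL" "TP = g ` TL0" using quot[OF TP(1)] by blast
  obtain TL where TL: "TL \<in> BL" "L.subspace TL" "pi_adic_complete sL \<pi> TL" "TL0 \<subseteq> TL"
    using L.cpl_B[OF TL0(1)] by blast
  have gTL: "g ` TL \<in> BP" using bg TL(1) unfolding bounded_map_def by blast
  obtain Q where Q: "Q \<in> BP" "P.subspace Q" "pi_adic_complete sP \<pi> Q" "g ` TL \<subseteq> Q"
    using P.cpl_B[OF gTL] by blast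
  have TPgTL: "TP \<subseteq> g ` TL" using TL0(2) TL(4) by blast
  have "\<forall>n. \<exists>H. H \<subseteq> TL \<and> finite H \<and> F n = g ` H"
  proof
    fix n
    have "F n \<subseteq> g ` TL" using TP(5) TPgTL by blast
    then show "\<exists>H. H \<subseteq> TL \<and> finite H \<and> F n = g ` H"
      using finite_subset_image[OF TP(4)] by blast
  qed
  then have "\<exists>H. \<forall>n. H n \<subseteq> TL \<and> finite (H n) \<and> F n = g ` H n" by (rule choice)
  then obtain H where H0: "\<forall>n. H n \<subseteq> TL \<and> finite (H n) \<and> F n = g ` H n" by blast
  have H: "\<And>n. H n \<subseteq> TL" "\<And>n. finite (H n)" "\<And>n. F n = g ` H n" using H0 by blast+
  define D where "D n = {d \<in> L.span (H n \<union> H (Suc n)). \<exists>u\<in>TL. g d = sP (\<pi>^n) (g u)}" for n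
  have DI: "d \<in> D n" if "d \<in> L.span (H n \<union> H (Suc n))" "u \<in> TL" "g d = sP (\<pi>^n) (g u)" for d u n
    unfolding D_def using that by blast
  have Dsub: "L.subspace (D n)" for n
  proof (rule L.subspaceI)
    have "(0::'l) \<in> TL" using TL(2) L.subspace_0 by blast
    moreover have "g 0 = sP (\<pi>^n) (g 0)" by simp
    moreover have "(0::'l) \<in> L.span (H n \<union> H (Suc n))" by (rule L.span_zero)
    ultimately show "0 \<in> D n" using DI by blast
  next
    fix x y assume "x \<in> D n" "y \<in> D n"
    then obtain u1 u2 where a: "x \<in> L.span (H n \<union> H (Suc n))" "u1 \<in> TL" "g x = sP (\<pi>^n) (g u1)"
      "y \<in> L.span (H n \<union> H (Suc n))" "u2 \<in> TL" "g y = sP (\<pi>^n) (g u2)" unfolding D_def by blast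
    have e: "g (x + y) = sP (\<pi>^n) (g (u1 + u2))" using a by (simp add: hg.add P.scale_right_distrib)
    have u: "u1 + u2 \<in> TL" using a(2,5) TL(2) L.subspace_add by blast
    have sp: "x + y \<in> L.span (H n \<union> H (Suc n))" using a(1,4) by (rule L.span_add)
    show "x + y \<in> D n" by (rule DI[OF sp u e])
  next
    fix c x assume "x \<in> D n"
    then obtain u where a: "x \<in> L.span (H n \<union> H (Suc n))" "u \<in> TL" "g x = sP (\<pi>^n) (g u)"
      unfolding D_def by blast
    have e: "g (sL c x) = sP (\<pi>^n) (g (sL c u))" using a by (simp add: hg.scale mult.commute)
    have u: "sL c u \<in> TL" using a(2) TL(2) L.subspace_scale by blast
    have sp: "sL c x \<in> L.span (H n \<union> H (Suc n))" using a(1) by (rule L.span_scale)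
    show "sL c x \<in> D n" by (rule DI[OF sp u e])
  qed
  have "\<forall>n. \<exists>E. finite E \<and> E \<subseteq> D n \<and> D n \<subseteq> L.span E"
  proof
    fix n
    have a: "D n \<subseteq> L.span (H n \<union> H (Suc n))" unfolding D_def by (rule Collect_subset)
    have b: "finite (H n \<union> H (Suc n))" using H(2) by simp
    show "\<exists>E. finite E \<and> E \<subseteq> D n \<and> D n \<subseteq> L.span E"
      by (rule Ld.noeth[OF b Dsub[of n] a])
  qed
  then have "\<exists>E. \<forall>n. finite (E n) \<and> E n \<subseteq> D n \<and> D n \<subseteq> L.span (E n)" by (rule choice)
  then obtain E where E0: "\<forall>n. finite (E n) \<and> E n \<subseteq> D n \<and> D n \<subseteq> L.span (E n)" by blast
  have E: "\<And>n. finite (E n)" "\<And>n. E n \<subseteq> D n" "\<And>n. D n \<subseteq> L.span (E n)" using E0 by blast+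
  have "\<forall>n. \<exists>uf. \<forall>e\<in>E n. uf e \<in> TL \<and> g e = sP (\<pi>^n) (g (uf e))"
  proof
    fix n
    have "\<forall>e\<in>E n. \<exists>u. u \<in> TL \<and> g e = sP (\<pi>^n) (g u)"
    proof
      fix e assume "e \<in> E n"
      then have "e \<in> D n" using E(2) by blast
      then show "\<exists>u. u \<in> TL \<and> g e = sP (\<pi>^n) (g u)" unfolding D_def by blast
    qed
    then show "\<exists>uf. \<forall>e\<in>E n. uf e \<in> TL \<and> g e = sP (\<pi>^n) (g (uf e))" by (rule bchoice)
  qed
  then have "\<exists>ue. \<forall>n. \<forall>e\<in>E n. ue n e \<in> TL \<and> g e = sP (\<pi>^n) (g (ue n e))" by (rule choice)
  then obtain ue where ue: "\<And>n e. e \<in> E n \<Longrightarrow> ue n e \<in> TL \<and> g e = sP (\<pi>^n) (g (ue n e))" by blast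
  define Z where "Z n = (\<lambda>e. e - sL (\<pi>^n) (ue n e)) ` E n" for n
  have Zfin: "finite (Z n)" for n unfolding Z_def using E(1) by blast
  have spanH: "L.span (H n \<union> H (Suc n)) \<subseteq> TL" for n
    using L.span_minimal[of "H n \<union> H (Suc n)" TL] H(1) TL(2) by blast
  have ETL: "E n \<subseteq> TL" for n using E(2) spanH unfolding D_def by blast
  have ZTL: "Z n \<subseteq> TL" for n
  proof
    fix z assume "z \<in> Z n"
    then obtain e where e: "e \<in> E n" "z = e - sL (\<pi>^n) (ue n e)" unfolding Z_def by blast
    have "e \<in> TL" using e(1) ETL by blast
    moreover have "sL (\<pi>^n) (ue n e) \<in> TL" using ue[OF e(1)] TL(2) L.subspace_scale by blast
    ultimately show "z \<in> TL" using e(2) TL(2) L.subspace_diff by blast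
  qed
  have Zker: "g z = 0" if zZ: "z \<in> Z n" for z n
  proof -
    obtain e where e: "e \<in> E n" "z = e - sL (\<pi>^n) (ue n e)" using zZ unfolding Z_def by blast
    show ?thesis using e ue[OF e(1)] by (simp add: hg.diff hg.scale)
  qed
  have Zspker: "g z = 0" if "z \<in> L.span (Z n)" for z n
    using hg.eq_0_on_span[OF _ that] Zker by blast
  have Dsplit: "\<exists>u\<in>TL. \<exists>z\<in>L.span (Z n). d = sL (\<pi>^n) u + z" if d: "d \<in> L.span (E n)" for d n
    using d
  proof (induction rule: L.span_induct_alt)
    case base
    have "(0::'l) = sL (\<pi>^n) 0 + 0" by simp
    then show ?case using L.span_zero L.subspace_0[OF TL(2)] by blast
  next
    case (step c x y)
    obtain u z where uz: "u \<in> TL" "z \<in> L.span (Z n)" "y = sL (\<pi>^n) u + z" using step.IH by blast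
    define zx where "zx = x - sL (\<pi>^n) (ue n x)"
    have zx: "zx \<in> Z n" unfolding Z_def zx_def using step.hyps by blast
    have ux: "ue n x \<in> TL" using ue step.hyps by blast
    have "sL c x + y = sL (\<pi>^n) (sL c (ue n x) + u) + (sL c zx + z)"
      unfolding zx_def uz(3) by (simp add: L.scale_right_distrib L.scale_right_diff_distrib mult.commute algebra_simps)
    moreover have "sL c (ue n x) + u \<in> TL" using ux uz(1) TL(2) L.subspace_add L.subspace_scale by blast
    moreover have "sL c zx + z \<in> L.span (Z n)" using zx uz(2) L.span_add L.span_scale L.span_base by blast
    ultimately show ?case by blast
  qed
  define G where "G n = H n \<union> (\<Union>i<n. Z i)" for n
  have Gfin: "finite (G n)" for n unfolding G_def using H(2) Zfin by simp
  have GTL: "G n \<subseteq> TL" for n unfolding G_def using H(1) ZTL by blast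
  have spGTL: "L.span (G n) \<subseteq> TL" for n using L.span_minimal[OF GTL TL(2)] .
  define W where "W = {y \<in> TL. g y \<in> S \<and> (\<forall>n. y \<in> L.ssum (L.span (G n)) (L.pT n TL))}"
  have WTL: "W \<subseteq> TL" unfolding W_def by blast
  have compW: "compactoid sL \<pi> BL W"
  proof (rule L.compactoidI[OF TL(1,2) WTL])
    fix n
    have "W \<subseteq> L.ssum (L.span (G n)) (L.pT n TL)" unfolding W_def by auto
    then show "\<exists>F. finite F \<and> F \<subseteq> TL \<and> W \<subseteq> L.ssum (L.span F) (L.pT n TL)"
      using Gfin[of n] GTL[of n] by (intro exI[of _ "G n"] conjI)
  qed
  have "S \<subseteq> g ` W"
  proof
    fix s assume sS: "s \<in> S"
    have "\<forall>n. \<exists>a t. a \<in> P.span (F n) \<and> t \<in> TP \<and> s = a + sP (\<pi>^n) t"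
    proof
      fix n
      have "s \<in> P.ssum (P.span (F n)) (P.pT n TP)" using TP(6)[of n] sS by (rule subsetD)
      then obtain a b where ab: "a \<in> P.span (F n)" "b \<in> P.pT n TP" "s = a + b" by (rule ssumdE)
      obtain t where t: "t \<in> TP" "b = sP (\<pi>^n) t" using ab(2) by (rule pTdE)
      show "\<exists>a t. a \<in> P.span (F n) \<and> t \<in> TP \<and> s = a + sP (\<pi>^n) t" using ab(1,3) t by blast
    qed
    then have "\<exists>a. \<forall>n. \<exists>t. a n \<in> P.span (F n) \<and> t \<in> TP \<and> s = a n + sP (\<pi>^n) t" by (rule choice)
    then obtain a where a0: "\<forall>n. \<exists>t. a n \<in> P.span (F n) \<and> t \<in> TP \<and> s = a n + sP (\<pi>^n) t" by blast
    then have "\<exists>t. \<forall>n. a n \<in> P.span (F n) \<and> t n \<in> TP \<and> s = a n + sP (\<pi>^n) (t n)" by (rule choice)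
    then obtain t where at0: "\<forall>n. a n \<in> P.span (F n) \<and> t n \<in> TP \<and> s = a n + sP (\<pi>^n) (t n)" by blast
    have at: "\<And>n. a n \<in> P.span (F n)" "\<And>n. t n \<in> TP" "\<And>n. s = a n + sP (\<pi>^n) (t n)"
      using at0 by blast+
    have an: "a n = s - sP (\<pi>^n) (t n)" for n using at(3)[of n] by (simp add: eq_diff_eq)
    have "\<forall>n. \<exists>b. b \<in> L.span (H n) \<and> g b = a n"
    proof
      fix n
      have "a n \<in> P.span (g ` H n)" using at(1)[of n] H(3)[of n] by simp
      then have "a n \<in> g ` L.span (H n)" using hg.span_image by simp
      then obtain bb where "bb \<in> L.span (H n)" "a n = g bb" by (rule imageE)
      then show "\<exists>b. b \<in> L.span (H n) \<and> g b = a n" by (intro exI[of _ bb]) simp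
    qed
    then have "\<exists>b. \<forall>n. b n \<in> L.span (H n) \<and> g (b n) = a n" by (rule choice)
    then obtain b where b0: "\<forall>n. b n \<in> L.span (H n) \<and> g (b n) = a n" by blast
    have bH: "\<And>n. b n \<in> L.span (H n)" and gb: "\<And>n. g (b n) = a n" using b0 by blast+
    have "\<forall>n. \<exists>u z. u \<in> TL \<and> z \<in> L.span (Z n) \<and> b (Suc n) - b n = sL (\<pi>^n) u + z"
    proof
      fix n
      have s1: "b (Suc n) \<in> L.span (H n \<union> H (Suc n))"
        using bH[of "Suc n"] L.span_mono[of "H (Suc n)" "H n \<union> H (Suc n)"] by blast
      have s2: "b n \<in> L.span (H n \<union> H (Suc n))"
        using bH[of n] L.span_mono[of "H n" "H n \<union> H (Suc n)"] by blast
      have sp: "b (Suc n) - b n \<in> L.span (H n \<union> H (Suc n))" using s1 s2 by (rule L.span_diff)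
      have "sP \<pi> (t (Suc n)) \<in> TP" using at(2)[of "Suc n"] by (rule P.subspace_scale[OF TP(2)])
      then have "t n - sP \<pi> (t (Suc n)) \<in> TP" using at(2)[of n] P.subspace_diff[OF TP(2)] by blast
      then have "t n - sP \<pi> (t (Suc n)) \<in> g ` TL" using TPgTL by (rule subsetD[rotated])
      then obtain u where u: "u \<in> TL" "t n - sP \<pi> (t (Suc n)) = g u" by (rule imageE)
      have e: "g (b (Suc n) - b n) = sP (\<pi>^n) (g u)"
        unfolding hg.diff gb an u(2)[symmetric]
        by (simp add: P.scale_right_diff_distrib mult.commute)
      have "b (Suc n) - b n \<in> D n" by (rule DI[OF sp u(1) e])
      then have "b (Suc n) - b n \<in> L.span (E n)" using E(3) by blast
      then show "\<exists>u z. u \<in> TL \<and> z \<in> L.span (Z n) \<and> b (Suc n) - b n = sL (\<pi>^n) u + z"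
        using Dsplit by blast
    qed
    then have "\<exists>u. \<forall>n. \<exists>z. u n \<in> TL \<and> z \<in> L.span (Z n) \<and> b (Suc n) - b n = sL (\<pi>^n) (u n) + z"
      by (rule choice)
    then obtain u where u0: "\<forall>n. \<exists>z. u n \<in> TL \<and> z \<in> L.span (Z n) \<and> b (Suc n) - b n = sL (\<pi>^n) (u n) + z"
      by blast
    then have "\<exists>z. \<forall>n. u n \<in> TL \<and> z n \<in> L.span (Z n) \<and> b (Suc n) - b n = sL (\<pi>^n) (u n) + z n"
      by (rule choice)
    then obtain z where uz0: "\<forall>n. u n \<in> TL \<and> z n \<in> L.span (Z n) \<and> b (Suc n) - b n = sL (\<pi>^n) (u n) + z n"
      by blast
    have uz: "\<And>n. u n \<in> TL" "\<And>n. z n \<in> L.span (Z n)" "\<And>n. b (Suc n) - b n = sL (\<pi>^n) (u n) + z n"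
      using uz0 by blast+
    define x where "x n = b n - (\<Sum>i<n. z i)" for n
    have xstep: "x (Suc n) - x n = sL (\<pi>^n) (u n)" for n
    proof -
      have "x (Suc n) - x n = (b (Suc n) - b n) - z n" unfolding x_def by (simp add: algebra_simps)
      then show ?thesis using uz(3)[of n] by simp
    qed
    have xG: "x n \<in> L.span (G n)" for n
    proof -
      have "b n \<in> L.span (G n)" using bH[of n] L.span_mono[of "H n" "G n"] unfolding G_def by blast
      moreover have "(\<Sum>i<n. z i) \<in> L.span (G n)"
      proof (rule L.span_sum)
        fix i assume "i \<in> {..<n}"
        then have "Z i \<subseteq> G n" unfolding G_def by blast
        then show "z i \<in> L.span (G n)" using uz(2)[of i] L.span_mono by blast
      qed
      ultimately show ?thesis unfolding x_def by (rule L.span_diff)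
    qed
    have xTL: "x n \<in> TL" for n using xG spGTL by blast
    have gx: "g (x n) = a n" for n
    proof -
      have "g (\<Sum>i<n. z i) = (\<Sum>i<n. g (z i))" by (rule hg.sum)
      also have "\<dots> = 0" using Zspker[OF uz(2)] by (intro sum.neutral) blast
      finally show ?thesis unfolding x_def hg.diff gb by simp
    qed
    have xd: "x m - x n \<in> L.pT n TL" if nm: "n \<le> m" for m n
      using nm
    proof (induction m rule: dec_induct)
      case base
      show ?case using L.subspace_0[OF L.pT_sub[OF TL(2)]] by simp
    next
      case (step m)
      have "x (Suc m) - x n = sL (\<pi>^m) (u m) + (x m - x n)" using xstep[of m] by (simp add: algebra_simps)
      moreover have "sL (\<pi>^m) (u m) \<in> L.pT n TL"
        using L.pT_mem[OF uz(1)[of m]] L.pT_mono[OF TL(2) step.hyps(1)] by blast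
      ultimately show ?case using step.IH L.subspace_add[OF L.pT_sub[OF TL(2)]] by metis
    qed
    have cau: "\<forall>k. \<exists>N. \<forall>m\<ge>N. \<forall>n\<ge>N. x m - x n \<in> L.pT k TL"
    proof
      fix k
      have "x m - x n \<in> L.pT k TL" if "m \<ge> k" "n \<ge> k" for m n
      proof -
        have "x m - x n = (x m - x k) - (x n - x k)" by simp
        then show ?thesis using xd[OF that(1)] xd[OF that(2)] L.subspace_diff[OF L.pT_sub[OF TL(2)]] by metis
      qed
      then show "\<exists>N. \<forall>m\<ge>N. \<forall>n\<ge>N. x m - x n \<in> L.pT k TL" by blast
    qed
    have cplT: "\<forall>x::nat \<Rightarrow> 'l. (\<forall>n. x n \<in> TL) \<longrightarrow>
        (\<forall>k. \<exists>N. \<forall>m\<ge>N. \<forall>n\<ge>N. x m - x n \<in> L.pT k TL) \<longrightarrow>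
        (\<exists>y\<in>TL. \<forall>k. \<exists>N. \<forall>n\<ge>N. x n - y \<in> L.pT k TL)"
      using TL(3) unfolding pi_adic_complete_alt by (rule conjunct2)
    have "\<forall>n. x n \<in> TL" using xTL by blast
    then obtain y where yTL: "y \<in> TL" and conv: "\<forall>k. \<exists>N. \<forall>n\<ge>N. x n - y \<in> L.pT k TL"
      using cplT cau by blast
    have yG: "y \<in> L.ssum (L.span (G k)) (L.pT k TL)" for k
    proof -
      obtain N where N: "\<forall>n\<ge>N. x n - y \<in> L.pT k TL" using conv by blast
      define n where "n = max N k"
      have d1: "x n - y \<in> L.pT k TL" using N n_def by simp
      have d2: "x n - x k \<in> L.pT k TL" using xd n_def by simp
      have "(x n - x k) - (x n - y) \<in> L.pT k TL"
        using d1 d2 L.subspace_diff[OF L.pT_sub[OF TL(2)]] by blast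
      moreover have "y = x k + ((x n - x k) - (x n - y))" by simp
      ultimately show ?thesis using xG[of k] by (intro ssumdI)
    qed
    have gy: "g y - s = 0"
    proof (rule P.sep_zero[OF Q(3)])
      fix r
      obtain N where N: "\<forall>n\<ge>N. x n - y \<in> L.pT r TL" using conv by blast
      define n where "n = max N r"
      have "x n - y \<in> L.pT r TL" using N n_def by simp
      then obtain w where w: "w \<in> TL" "x n - y = sL (\<pi>^r) w" by (rule pTdE)
      have gwQ: "g w \<in> Q" using w(1) Q(4) by blast
      have tQ: "t n \<in> Q" using at(2)[of n] TPgTL Q(4) by blast
      have eq: "g y - s = - sP (\<pi>^r) (g w) - sP (\<pi>^n) (t n)"
      proof -
        have "g (x n - y) = sP (\<pi>^r) (g w)" using w(2) hg.scale by simp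
        then have "g y = g (x n) - sP (\<pi>^r) (g w)" unfolding hg.diff by (simp add: algebra_simps)
        then show ?thesis using gx[of n] an[of n] by (simp add: algebra_simps)
      qed
      have m1: "sP (\<pi>^r) (g w) \<in> P.pT r Q" using P.pT_mem[OF gwQ] .
      have m2: "sP (\<pi>^n) (t n) \<in> P.pT r Q"
        using P.pT_mem[OF tQ] P.pT_mono[OF Q(2), of r n] n_def by auto
      have ss: "P.subspace (P.pT r Q)" by (rule P.pT_sub[OF Q(2)])
      show "g y - s \<in> P.pT r Q" unfolding eq
        using P.subspace_diff[OF ss P.subspace_neg[OF ss m1] m2] .
    qed
    have "y \<in> W" unfolding W_def using yTL yG gy sS by simp
    then show "s \<in> g ` W" using gy by (metis eq_iff_diff_eq_0 image_eqI)
  qed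
  moreover have "g ` W \<subseteq> S" unfolding W_def by blast
  ultimately show ?thesis using compW by blast
qed

end



lemma mk_bmod:
  assumes "dvr_uniformiser \<pi>" "complete_born_module s \<pi> B" "born_torsionfree s \<pi> B"
  shows "bmod s \<pi> B"
proof -
  have "module s" using assms(2) unfolding complete_born_module_def born_module_def by simp
  moreover have "\<pi> \<noteq> 0" using assms(1) unfolding dvr_uniformiser_def by simp
  moreover have "alg_torsionfree s" using assms(3) unfolding born_torsionfree_def by simp
  ultimately show ?thesis using assms(2) by (simp add: bmod_def bmod_axioms_def)
qed

theorem proposition4p6:
  fixes \<pi> :: "'v::idom"
    and sK :: "'v \<Rightarrow> 'k::ab_group_add \<Rightarrow> 'k" and BK :: "'k set set"
    and sL :: "'v \<Rightarrow> 'l::ab_group_add \<Rightarrow> 'l" and BL :: "'l set set"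
    and sP :: "'v \<Rightarrow> 'p::ab_group_add \<Rightarrow> 'p" and BP :: "'p set set"
    and f :: "'k \<Rightarrow> 'l" and g :: "'l \<Rightarrow> 'p"
  assumes V: "complete_dvr \<pi>"
    and K: "complete_born_module sK \<pi> BK" "born_torsionfree sK \<pi> BK"
    and L: "complete_born_module sL \<pi> BL" "born_torsionfree sL \<pi> BL"
    and P: "complete_born_module sP \<pi> BP" "born_torsionfree sP \<pi> BP"
    and Palg: "alg_torsionfree sP"
    and ext: "born_extension sK BK sL BL sP BP f g"
  shows "complete_born_module sK \<pi> (compactoid_born sK \<pi> BK) \<and>
         complete_born_module sL \<pi> (compactoid_born sL \<pi> BL) \<and>
         complete_born_module sP \<pi> (compactoid_born sP \<pi> BP) \<and>
         born_extension sK (compactoid_born sK \<pi> BK) sL (compactoid_born sL \<pi> BL)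
                        sP (compactoid_born sP \<pi> BP) f g \<and>
         (nuclear sL \<pi> BL \<longleftrightarrow> nuclear sK \<pi> BK \<and> nuclear sP \<pi> BP)"
proof -
  have dvr: "dvr_uniformiser \<pi>" using V unfolding complete_dvr_def by simp
  have bK: "bmod sK \<pi> BK" using mk_bmod[OF dvr K] .
  have bL: "bmod sL \<pi> BL" using mk_bmod[OF dvr L] .
  have bP: "bmod sP \<pi> BP" using mk_bmod[OF dvr P] .
  interpret E: bext sK sL sP \<pi> BK BL BP f g
    by (rule bext.intro[OF bK bL bP bext_axioms.intro[OF ext dvr]])
  have c1: "complete_born_module sK \<pi> (compactoid_born sK \<pi> BK)" by (rule E.K.cb_complete)
  have c2: "complete_born_module sL \<pi> (compactoid_born sL \<pi> BL)" by (rule E.L.cb_complete)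
  have c3: "complete_born_module sP \<pi> (compactoid_born sP \<pi> BP)" by (rule E.P.cb_complete)
  have imf: "compactoid sL \<pi> BL (f ` S)" if "compactoid sK \<pi> BK S" for S
    by (rule comp_image[OF bK bL E.hf_ax E.bf that])
  have img: "compactoid sP \<pi> BP (g ` S)" if "compactoid sL \<pi> BL S" for S
    by (rule comp_image[OF bL bP E.hg_ax E.bg that])
  have e: "born_extension sK (compactoid_born sK \<pi> BK) sL (compactoid_born sL \<pi> BL)
                        sP (compactoid_born sP \<pi> BP) f g"
    unfolding born_extension_def
  proof (intro conjI)
    show "module_hom sK sL f" by (rule E.hf_ax)
    show "module_hom sL sP g" by (rule E.hg_ax)
    show "bounded_map (compactoid_born sK \<pi> BK) (compactoid_born sL \<pi> BL) f"
      unfolding bounded_map_def compactoid_born_def using imf by blast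
    show "bounded_map (compactoid_born sL \<pi> BL) (compactoid_born sP \<pi> BP) g"
      unfolding bounded_map_def compactoid_born_def using img by blast
    show "inj f" by (rule E.injf)
    show "range f = {y. g y = 0}" by (rule E.ker)
    show "surj g" by (rule E.surjg)
    show "\<forall>S. (S \<in> compactoid_born sK \<pi> BK) = (f ` S \<in> compactoid_born sL \<pi> BL)"
      unfolding compactoid_born_def using imf E.emb_comp by blast
    show "\<forall>S\<in>compactoid_born sP \<pi> BP. \<exists>T\<in>compactoid_born sL \<pi> BL. S = g ` T"
      unfolding compactoid_born_def using E.lift_comp by blast
  qed
  have n: "nuclear sL \<pi> BL \<longleftrightarrow> nuclear sK \<pi> BK \<and> nuclear sP \<pi> BP"
  proof
    assume nL: "nuclear sL \<pi> BL"
    have "nuclear sK \<pi> BK" unfolding nuclear_def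
    proof
      fix S assume "S \<in> BK"
      then have "f ` S \<in> BL" using E.emb by blast
      then have "compactoid sL \<pi> BL (f ` S)" using nL unfolding nuclear_def by blast
      then show "compactoid sK \<pi> BK S" by (rule E.emb_comp)
    qed
    moreover have "nuclear sP \<pi> BP" unfolding nuclear_def
    proof
      fix S assume "S \<in> BP"
      then obtain T where T: "T \<in> BL" "S = g ` T" using E.quot by blast
      then have "compactoid sL \<pi> BL T" using nL unfolding nuclear_def by blast
      then show "compactoid sP \<pi> BP S" using img T(2) by blast
    qed
    ultimately show "nuclear sK \<pi> BK \<and> nuclear sP \<pi> BP" by blast
  next
    assume "nuclear sK \<pi> BK \<and> nuclear sP \<pi> BP"
    then have nK: "nuclear sK \<pi> BK" and nP: "nuclear sP \<pi> BP" by blast+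
    show "nuclear sL \<pi> BL" unfolding nuclear_def
    proof
      fix S assume SB: "S \<in> BL"
      have "g ` S \<in> BP" using E.bg SB unfolding bounded_map_def by blast
      then have "compactoid sP \<pi> BP (g ` S)" using nP unfolding nuclear_def by blast
      then obtain W where W: "compactoid sL \<pi> BL W" "g ` S = g ` W" using E.lift_comp by blast
      have WB: "W \<in> BL" using E.L.comp_bounded[OF W(1)] .
      obtain M where M: "M \<in> BL" "E.L.subspace M" "S \<union> W \<subseteq> M"
        using E.L.bnd_sub[OF E.L.un_B[OF SB WB]] by blast
      define D where "D = E.L.ssum S (uminus ` W)"
      have DM: "D \<subseteq> M"
      proof
        fix d assume "d \<in> D"
        then obtain a b where ab: "a \<in> S" "b \<in> uminus ` W" "d = a + b" unfolding D_def by (rule ssumdE)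
        have "a \<in> M" using ab(1) M(3) by blast
        moreover have "b \<in> M" using ab(2) M(3) E.L.subspace_neg[OF M(2)] by blast
        ultimately show "d \<in> M" using ab(3) E.L.subspace_add[OF M(2)] by blast
      qed
      define R where "R = f -` D"
      have "f ` R \<subseteq> D" unfolding R_def by blast
      then have "f ` R \<in> BL" using E.L.sub_B[OF M(1)] DM by blast
      then have "R \<in> BK" using E.emb by blast
      then have "compactoid sK \<pi> BK R" using nK unfolding nuclear_def by blast
      then have cfR: "compactoid sL \<pi> BL (f ` R)" by (rule imf)
      have "S \<subseteq> E.L.ssum W (f ` R)"
      proof
        fix x assume xS: "x \<in> S"
        have "g x \<in> g ` W" using xS W(2) by blast
        then obtain w where w: "w \<in> W" "g x = g w" by blast
        have "g (x - w) = 0" using w(2) by (simp add: E.hg.diff)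
        then obtain k where k: "x - w = f k" using E.kerE by blast
        have "f k \<in> D" unfolding D_def using xS w(1) k by (intro ssumdI[of x _ "- w"]) auto
        then have "k \<in> R" unfolding R_def by simp
        moreover have "x = w + f k" using k by (simp add: algebra_simps)
        ultimately show "x \<in> E.L.ssum W (f ` R)" using w(1) by (intro ssumdI) auto
      qed
      then show "compactoid sL \<pi> BL S" using E.L.comp_subset[OF E.L.comp_sum[OF W(1) cfR]] by blast
    qed
  qed
  show ?thesis using c1 c2 c3 e n by blast
qed


end
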